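(* Let $\beta=(\beta_n)_{n\ge0}$ be an essentially decreasing sequence of positive numbers with $\liminf_n\beta_n^{1/n}\ge1$, and assume that for some $a\in(0,1)$ the map $T_a$ induces a bounded composition operator on $H^2(\beta)$. Then $\beta$ satisfies the $\Delta_2$-condition.
   Context: $H^2(\beta)$ is the Hilbert space of analytic functions $f(z)=\sum_{n\ge0}a_nz^n$ on the unit disk $\mathbb D$ with $\|f\|^2=\sum_{n\ge0}|a_n|^2\beta_n<\infty$. $T_a(z)=\frac{a+z}{1+\bar a z}$ and $C_{T_a}f=f\circ T_a$. $\beta$ is essentially decreasing if there is $C\ge1$ with $\beta_m\le C\beta_n$ for all $m\ge n\ge0$. $\beta$ satisfies the $\Delta_2$-condition if there is $\delta\in(0,1)$ with $\beta_{2n}\ge\delta\beta_n$ for all $n\ge0$. *)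

theory Defs
  imports "HOL-Analysis.Analysis"
begin

text \<open>Elements of H^2(beta) are represented by their Taylor coefficient sequences
  c :: nat => complex; the associated function is z |-> sum_n c n * z^n on the unit disk.\<close>

definition in_H2 :: "(nat \<Rightarrow> real) \<Rightarrow> (nat \<Rightarrow> complex) \<Rightarrow> bool" where
  "in_H2 \<beta> c \<longleftrightarrow> summable (\<lambda>n. (norm (c n))\<^sup>2 * \<beta> n)"

definition H2_norm :: "(nat \<Rightarrow> real) \<Rightarrow> (nat \<Rightarrow> complex) \<Rightarrow> real" where
  "H2_norm \<beta> c = sqrt (\<Sum>n. (norm (c n))\<^sup>2 * \<beta> n)"

definition power_fun :: "(nat \<Rightarrow> complex) \<Rightarrow> complex \<Rightarrow> complex" where
  "power_fun c z = (\<Sum>n. c n * z ^ n)"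

definition taylor_coeffs :: "(complex \<Rightarrow> complex) \<Rightarrow> nat \<Rightarrow> complex" where
  "taylor_coeffs g n = (deriv ^^ n) g 0 / of_nat (fact n)"

definition T :: "complex \<Rightarrow> complex \<Rightarrow> complex" where
  "T a z = (a + z) / (1 + cnj a * z)"

definition comp_op :: "complex \<Rightarrow> (nat \<Rightarrow> complex) \<Rightarrow> nat \<Rightarrow> complex" where
  "comp_op a c = taylor_coeffs (power_fun c \<circ> T a)"

definition bounded_comp_op :: "(nat \<Rightarrow> real) \<Rightarrow> complex \<Rightarrow> bool" where
  "bounded_comp_op \<beta> a \<longleftrightarrow>
     (\<exists>M. \<forall>c. in_H2 \<beta> c \<longrightarrow>
        in_H2 \<beta> (comp_op a c) \<and> H2_norm \<beta> (comp_op a c) \<le> M * H2_norm \<beta> c)"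

definition ess_decreasing :: "(nat \<Rightarrow> real) \<Rightarrow> bool" where
  "ess_decreasing \<beta> \<longleftrightarrow> (\<exists>C\<ge>1. \<forall>m n. n \<le> m \<longrightarrow> \<beta> m \<le> C * \<beta> n)"

definition Delta2 :: "(nat \<Rightarrow> real) \<Rightarrow> bool" where
  "Delta2 \<beta> \<longleftrightarrow> (\<exists>\<delta>. 0 < \<delta> \<and> \<delta> < 1 \<and> (\<forall>n. \<beta> (2 * n) \<ge> \<delta> * \<beta> n))"

end

theory Submission imports Defs "HOL-Complex_Analysis.Complex_Analysis" begin


lemma phi_summable:
  fixes \<beta> :: "nat \<Rightarrow> real"
  assumes pos: "\<And>n. \<beta> n > 0"
    and lim: "liminf (\<lambda>n. ereal (root n (\<beta> n))) \<ge> 1"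
    and t: "0 \<le> t" "t < 1"
  shows "summable (\<lambda>k. t ^ (2*k) / \<beta> k)"
proof -
  have "ereal t < 1" using t by simp
  with lim obtain N where N: "\<And>n. n \<ge> N \<Longrightarrow> ereal t < ereal (root n (\<beta> n))"
    unfolding liminf_bounded_iff by blast
  have "norm (t ^ (2*k) / \<beta> k) \<le> t ^ k" if k: "k \<ge> max N 1" for k
  proof -
    have "t < root k (\<beta> k)" using N[of k] k by simp
    hence "t ^ k < (root k (\<beta> k)) ^ k" using t k by (intro power_strict_mono) auto
    also have "\<dots> = \<beta> k" using k pos[of k] by (simp add: real_root_pow_pos2 less_imp_le)
    finally have lt: "t ^ k < \<beta> k" .
    have "t ^ (2*k) / \<beta> k = t ^ k * (t ^ k / \<beta> k)" by (simp add: mult_2 power_add)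
    also have "\<dots> \<le> t ^ k * 1" using lt pos[of k] t
      by (intro mult_left_mono) auto
    finally show ?thesis using t pos[of k] by simp
  qed
  hence "eventually (\<lambda>k. norm (t ^ (2*k) / \<beta> k) \<le> t ^ k) sequentially"
    unfolding eventually_at_top_linorder by blast
  thus ?thesis
    by (rule summable_comparison_test_ev) (use t in \<open>simp\<close>)
qed

lemma amgm:
  fixes p q x :: real
  assumes "x > 0"
  shows "p * q \<le> (x * p^2 + q^2 / x) / 2"
proof -
  have "0 \<le> (x*p - q)^2" by simp
  hence "2 * x * p * q \<le> x^2 * p^2 + q^2" by (simp add: power2_eq_square algebra_simps)
  thus ?thesis using assms by (simp add: field_simps power2_eq_square)
qed

lemma step_bound:
  fixes \<beta> :: "nat \<Rightarrow> real" and a :: real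
  assumes pos: "\<And>n. \<beta> n > 0"
    and lim: "liminf (\<lambda>n. ereal (root n (\<beta> n))) \<ge> 1"
    and a: "0 < a" "a < 1"
    and bdd: "bounded_comp_op \<beta> (complex_of_real a)"
  shows "\<exists>Q\<ge>1. \<forall>t. 0 \<le> t \<longrightarrow> t < 1 \<longrightarrow>
     (\<Sum>k. ((a+t)/(1+a*t))^(2*k) / \<beta> k) \<le> Q * (\<Sum>k. t^(2*k) / \<beta> k)"
proof -
  obtain M where M: "\<And>c. in_H2 \<beta> c \<Longrightarrow> in_H2 \<beta> (comp_op (complex_of_real a) c) \<and>
        H2_norm \<beta> (comp_op (complex_of_real a) c) \<le> M * H2_norm \<beta> c"
    using bdd unfolding bounded_comp_op_def by blast
  define M' where "M' = max M 1"
  define Q where "Q = M'^2"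
  have M'1: "M' \<ge> 1" unfolding M'_def by simp
  have Q1: "Q \<ge> 1" unfolding Q_def using M'1 by (simp add: one_le_power)
  have "\<forall>t. 0 \<le> t \<longrightarrow> t < 1 \<longrightarrow>
     (\<Sum>k. ((a+t)/(1+a*t))^(2*k) / \<beta> k) \<le> Q * (\<Sum>k. t^(2*k) / \<beta> k)"
  proof (intro allI impI)
    fix t :: real assume t: "0 \<le> t" "t < 1"
    define v where "v = (a+t)/(1+a*t)"
    have den: "1 + a*t > 0" using a t by (simp add: add_pos_nonneg)
    have v0: "0 \<le> v" unfolding v_def using a t den by simp
    have "a + t < 1 + a*t"
    proof -
      have "0 < (1-a)*(1-t)" using a t by simp
      thus ?thesis by (simp add: algebra_simps)
    qed
    hence v1: "v < 1" unfolding v_def using den by simp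
    define \<Phi> where "\<Phi> = (\<Sum>k. t^(2*k) / \<beta> k)"
    have sumt: "summable (\<lambda>k. t^(2*k) / \<beta> k)" using phi_summable[OF pos lim t] .
    have \<Phi>0: "\<Phi> \<ge> 0" unfolding \<Phi>_def using pos t
      by (intro suminf_nonneg[OF sumt]) (simp add: less_imp_le)
    have main: "(\<Sum>k<L. v^(2*k) / \<beta> k) \<le> Q * \<Phi>" for L
    proof -
      define c where "c = (\<lambda>k. if k < L then complex_of_real (v^k / \<beta> k) else 0)"
      define PL where "PL = (\<Sum>k<L. v^(2*k) / \<beta> k)"
      have PL0: "PL \<ge> 0" unfolding PL_def using pos v0 by (intro sum_nonneg) (simp add: less_imp_le)
      have inc: "in_H2 \<beta> c" unfolding in_H2_def
        by (rule summable_finite[of "{..<L}"]) (auto simp: c_def)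
      have "H2_norm \<beta> c = sqrt (\<Sum>k<L. (norm (c k))\<^sup>2 * \<beta> k)"
        unfolding H2_norm_def by (subst suminf_finite[of "{..<L}"]) (auto simp: c_def)
      also have "(\<Sum>k<L. (norm (c k))\<^sup>2 * \<beta> k) = PL"
        unfolding PL_def
      proof (rule sum.cong[OF refl])
        fix k assume "k \<in> {..<L}"
        hence "c k = complex_of_real (v^k / \<beta> k)" by (simp add: c_def)
        hence "norm (c k) = \<bar>v^k / \<beta> k\<bar>" by (simp only: norm_of_real)
        hence "(norm (c k))\<^sup>2 * \<beta> k = (v^k / \<beta> k)^2 * \<beta> k" by (simp only: power2_abs)
        also have "\<dots> = v^(2*k) / \<beta> k"
        proof -
          have e: "v^(2*k) = v^k * v^k" by (simp add: mult_2 power_add)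
          show ?thesis unfolding e using pos[of k] by (simp add: power2_eq_square)
        qed
        finally show "(norm (c k))\<^sup>2 * \<beta> k = v^(2*k) / \<beta> k" .
      qed
      finally have normc: "H2_norm \<beta> c = sqrt PL" .
      have pf: "power_fun c = (\<lambda>z. \<Sum>k<L. c k * z^k)"
        unfolding power_fun_def by (rule ext, rule suminf_finite[of "{..<L}"]) (auto simp: c_def)
      define h where "h = power_fun c \<circ> T (complex_of_real a)"
      have heq: "h = (\<lambda>z. \<Sum>k<L. c k * ((complex_of_real a + z) / (1 + complex_of_real a * z))^k)"
        unfolding h_def pf T_def by (simp add: o_def)
      have hol: "h holomorphic_on ball 0 1"
        unfolding heq
      proof (rule holomorphic_on_sum, rule holomorphic_on_mult, rule holomorphic_on_const, rule holomorphic_on_power,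
             rule holomorphic_on_divide)
        show "(\<lambda>z. complex_of_real a + z) holomorphic_on ball 0 1" by (intro holomorphic_intros)
        show "(\<lambda>z. 1 + complex_of_real a * z) holomorphic_on ball 0 1" by (intro holomorphic_intros)
        fix z :: complex assume z: "z \<in> ball 0 1"
        have "norm (complex_of_real a * z) = a * norm z" using a by (simp add: norm_mult)
        also have "\<dots> \<le> norm z" using a by (intro mult_left_le_one_le) auto
        also have "\<dots> < 1" using z by simp
        finally have "norm (complex_of_real a * z) < 1" .
        hence "complex_of_real a * z \<noteq> -1" by auto
        thus "1 + complex_of_real a * z \<noteq> 0" by (metis add_eq_0_iff)
      qed
      define g where "g = comp_op (complex_of_real a) c"
      have sums: "(\<lambda>n. g n * complex_of_real t ^ n) sums h (complex_of_real t)"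
        using holomorphic_power_series[OF hol, of "complex_of_real t"] t
        by (simp add: g_def comp_op_def taylor_coeffs_def h_def)
      have "T (complex_of_real a) (complex_of_real t) = complex_of_real v"
        unfolding T_def v_def by simp
      hence "h (complex_of_real t) = (\<Sum>k<L. c k * (complex_of_real v)^k)"
        unfolding h_def pf by simp
      also have "\<dots> = complex_of_real PL"
        unfolding PL_def of_real_sum
      proof (rule sum.cong[OF refl])
        fix k assume "k \<in> {..<L}"
        thus "c k * (complex_of_real v)^k = complex_of_real (v^(2*k) / \<beta> k)"
          by (simp add: c_def mult_2 power_add)
      qed
      finally have ht: "h (complex_of_real t) = complex_of_real PL" .
      from M[OF inc] have ing: "in_H2 \<beta> g" and gle: "H2_norm \<beta> g \<le> M * sqrt PL"
        unfolding g_def normc by auto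
      define A where "A = (\<Sum>n. (norm (g n))\<^sup>2 * \<beta> n)"
      have sumA: "summable (\<lambda>n. (norm (g n))\<^sup>2 * \<beta> n)" using ing unfolding in_H2_def .
      have A0: "A \<ge> 0" unfolding A_def using pos
        by (intro suminf_nonneg[OF sumA]) (simp add: less_imp_le)
      have "sqrt A \<le> M' * sqrt PL"
        using gle unfolding H2_norm_def A_def[symmetric]
        by (smt (verit, ccfv_SIG) M'_def mult_right_mono real_sqrt_ge_zero PL0 max.cobounded1)
      hence "(sqrt A)^2 \<le> (M' * sqrt PL)^2" using A0 by (intro power_mono) auto
      hence AQ: "A \<le> Q * PL" using A0 PL0 by (simp add: Q_def power_mult_distrib)
      define lam where "lam = 1 / Q"
      have lam0: "lam > 0" unfolding lam_def using Q1 by simp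
      define X where "X = (\<lambda>n. (norm (g n))\<^sup>2 * \<beta> n)"
      define Y where "Y = (\<lambda>n. t^(2*n) / \<beta> n)"
      have bnd: "norm (g n * complex_of_real t ^ n) \<le> (lam * X n + Y n / lam) / 2" for n
      proof -
        have "norm (g n * complex_of_real t ^ n) = norm (g n) * t^n"
          using t by (simp add: norm_mult norm_power)
        also have "\<dots> \<le> ((lam * \<beta> n) * (norm (g n))^2 + (t^n)^2 / (lam * \<beta> n)) / 2"
          using amgm[of "lam * \<beta> n" "norm (g n)" "t^n"] lam0 pos[of n] by simp
        also have "\<dots> = (lam * X n + Y n / lam) / 2"
          unfolding X_def Y_def power_even_eq using lam0 pos[of n]
          by (simp add: field_simps)
        finally show ?thesis .
      qed
      have gs: "(\<lambda>n. (lam * X n + Y n / lam) / 2) sums ((lam * A + \<Phi> / lam) / 2)"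
        unfolding A_def \<Phi>_def
        by (intro sums_divide sums_add sums_mult summable_sums) (use sumA sumt X_def Y_def in auto)
      have "norm (h (complex_of_real t)) \<le> (lam * A + \<Phi> / lam) / 2"
        using norm_suminf_le[OF bnd sums_summable[OF gs]] sums_unique[OF sums] sums_unique[OF gs]
        by simp
      hence "PL \<le> (lam * A + \<Phi> / lam) / 2" using ht PL0 by simp
      also have "\<dots> \<le> (lam * (Q * PL) + \<Phi> / lam) / 2"
        using AQ lam0 by (intro divide_right_mono add_right_mono mult_left_mono) auto
      also have "\<dots> = (PL + Q * \<Phi>) / 2" unfolding lam_def using Q1 by simp
      finally show ?thesis unfolding PL_def[symmetric] by simp
    qed
    have "(\<Sum>k. v^(2*k) / \<beta> k) \<le> Q * \<Phi>"
      by (rule suminf_le_const[OF phi_summable[OF pos lim v0 v1] main])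
    thus "(\<Sum>k. ((a+t)/(1+a*t))^(2*k) / \<beta> k) \<le> Q * (\<Sum>k. t^(2*k) / \<beta> k)"
      unfolding v_def \<Phi>_def .
  qed
  thus ?thesis using Q1 by blast
qed



lemma core:
  fixes \<beta> :: "nat \<Rightarrow> real" and \<Phi> :: "real \<Rightarrow> real"
  assumes pos: "\<And>n. \<beta> n > 0"
    and C: "C \<ge> 1" "\<And>m n. n \<le> m \<Longrightarrow> \<beta> m \<le> C * \<beta> n"
    and Phi: "\<And>t. \<Phi> t = (\<Sum>k. t^(2*k) / \<beta> k)"
    and summ: "\<And>t. 0 \<le> t \<Longrightarrow> t < 1 \<Longrightarrow> summable (\<lambda>k. t^(2*k) / \<beta> k)"
    and Q: "Q \<ge> 1" and rho: "0 < \<rho>" "\<rho> \<le> 1/2" "\<rho> * ln (2*Q) \<le> 1/16"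
    and hyp: "\<And>t. 0 \<le> t \<Longrightarrow> t < 1 \<Longrightarrow> \<Phi> (1 - \<rho> * (1 - t)) \<le> Q * \<Phi> t"
    and n: "real n \<ge> ln (2*Q)" "n \<ge> 1"
  shows "\<beta> n \<le> 2 * Q * C^2 * \<beta> (2*n)"
proof -
  define L where "L = ln (2*Q)"
  have L0: "L > 0" unfolding L_def using Q by simp
  have nL: "real n \<ge> L" "real n > 0" using n L_def by auto
  define t where "t = 1 - L / n"
  define y where "y = 1 - \<rho> * L / n"
  have t0: "0 \<le> t" "t < 1" unfolding t_def using nL L0 by (auto simp: field_simps)
  have yt: "y = 1 - \<rho> * (1 - t)" unfolding y_def t_def by simp
  have rL: "\<rho> * L / n \<le> 1/16"
  proof -
    have "\<rho> * L / n \<le> \<rho> * L / 1" using rho L0 n by (intro divide_left_mono) (auto simp: mult_nonneg_nonneg)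
    moreover have "\<rho> * L \<le> 1/16" using rho L_def by simp
    ultimately show ?thesis by linarith
  qed
  have rL0: "\<rho> * L / n \<ge> 0" using rho L0 by simp
  have y0: "0 < y" "y \<le> 1" unfolding y_def using rL rL0 by linarith+
  have "\<rho> * L / n > 0" using rho L0 nL by simp
  hence y1: "y < 1" unfolding y_def by linarith
  have ty: "t \<le> y"
  proof -
    have "\<rho>*(1-t) \<le> 1*(1-t)" using rho t0 by (intro mult_right_mono) auto
    hence "\<rho>*(1-t) \<le> 1-t" by simp
    thus ?thesis unfolding yt by linarith
  qed
  have PhiyQ: "\<Phi> y \<le> Q * \<Phi> t" unfolding yt by (rule hyp[OF t0])
  have sumy: "summable (\<lambda>k. y^(2*k) / \<beta> k)"
    using summ y0 y1 by simp
  have y8: "y^(8*n) \<ge> 1/2"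
  proof -
    have "1 + real (8*n) * (- (\<rho> * L / n)) \<le> (1 + - (\<rho> * L / n))^(8*n)"
      by (rule Bernoulli_inequality) (use rL in linarith)
    moreover have "real (8*n) * (- (\<rho> * L / n)) = - 8 * (\<rho> * L)" using nL by simp
    moreover have "\<rho> * L \<le> 1/16" using rho L_def by simp
    ultimately show ?thesis unfolding y_def by simp
  qed
  have low: "real n / (C * \<beta> (2*n)) \<le> \<Phi> y"
  proof -
    have "(\<Sum>k\<in>{2*n..<4*n}. (1/2) / (C * \<beta> (2*n))) \<le> (\<Sum>k\<in>{2*n..<4*n}. y^(2*k) / \<beta> k)"
    proof (rule sum_mono)
      fix k assume k: "k \<in> {2*n..<4*n}"
      have "y^(8*n) \<le> y^(2*k)" using k y0 by (intro power_decreasing) auto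
      hence h1: "1/2 \<le> y^(2*k)" using y8 by simp
      have h2: "\<beta> k \<le> C * \<beta> (2*n)" using C(2) k by simp
      have "(1/2) / (C * \<beta> (2*n)) \<le> y^(2*k) / (C * \<beta> (2*n))"
        using h1 C pos[of "2*n"] by (intro divide_right_mono) auto
      also have "\<dots> \<le> y^(2*k) / \<beta> k"
        using h2 pos[of k] y0 by (intro divide_left_mono) auto
      finally show "(1/2) / (C * \<beta> (2*n)) \<le> y^(2*k) / \<beta> k" .
    qed
    also have "\<dots> \<le> \<Phi> y" unfolding Phi
    proof (rule sum_le_suminf[OF sumy])
      fix k have "0 < \<beta> k" by (rule pos)
      thus "0 \<le> y^(2*k) / \<beta> k" using y0 by simp
    qed simp
    finally have "(\<Sum>k\<in>{2*n..<4*n}. (1/2) / (C * \<beta> (2*n))) \<le> \<Phi> y" .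
    moreover have "(\<Sum>k\<in>{2*n..<4*n}. (1/2) / (C * \<beta> (2*n))) = real n / (C * \<beta> (2*n))"
    proof -
      have "card {2*n..<4*n} = 2*n" by simp
      thus ?thesis by simp
    qed
    ultimately show ?thesis by simp
  qed
  have sumt: "summable (\<lambda>k. t^(2*k) / \<beta> k)" using summ t0 by simp
  define S where "S = (\<Sum>k<n. t^(2*k) / \<beta> k)"
  define tail where "tail = (\<Sum>k. t^(2*(k+n)) / \<beta> (k+n))"
  have split: "\<Phi> t = tail + S" unfolding Phi tail_def S_def
    by (rule suminf_split_initial_segment[OF sumt])
  have Sle: "S \<le> real n * (C / \<beta> n)"
  proof -
    have "S \<le> (\<Sum>k<n. C / \<beta> n)" unfolding S_def
    proof (rule sum_mono)
      fix k assume "k \<in> {..<n}"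
      hence h: "\<beta> n \<le> C * \<beta> k" using C(2) by simp
      have "t^(2*k) / \<beta> k \<le> 1 / \<beta> k" using t0 pos[of k]
        by (intro divide_right_mono power_le_one) auto
      also have "\<dots> \<le> C / \<beta> n" using h pos[of k] pos[of n] by (simp add: field_simps)
      finally show "t^(2*k) / \<beta> k \<le> C / \<beta> n" .
    qed
    thus ?thesis by simp
  qed
  define q where "q = (t / y)^(2*n)"
  have q_le: "q \<le> 1 / (2*Q)"
  proof -
    have "t / y \<le> 1 - (1 - \<rho>) * L / n"
    proof -
      have yt2: "y - t = (1 - \<rho>) * L / n" unfolding y_def t_def using nL by (simp add: field_simps)
      have "(y-t)*y \<le> (y-t)*1" using y0 ty by (intro mult_left_mono) auto
      hence "(y - t) \<le> (y - t) / y" using y0 by (simp add: pos_le_divide_eq)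
      hence "t / y \<le> 1 - (y - t)" using y0 by (simp add: field_simps)
      thus ?thesis using yt2 by simp
    qed
    also have "\<dots> \<le> exp (- ((1 - \<rho>) * L / n))" using exp_ge_add_one_self[of "- ((1 - \<rho>) * L / n)"] by simp
    finally have "t / y \<le> exp (- ((1 - \<rho>) * L / n))" .
    hence "q \<le> exp (- ((1 - \<rho>) * L / n)) ^ (2*n)" unfolding q_def using t0 y0
      by (intro power_mono) auto
    also have "\<dots> = exp (of_nat (2*n) * (- ((1 - \<rho>) * L / n)))" by (rule exp_of_nat_mult[symmetric])
    also have "of_nat (2*n) * (- ((1 - \<rho>) * L / n)) = - (2 * (1 - \<rho>) * L)" using nL by simp
    also have "exp (- (2 * (1 - \<rho>) * L)) \<le> exp (- L)" using rho L0 by (simp add: algebra_simps)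
    also have "exp (- L) = 1 / (2*Q)" unfolding L_def using Q by (simp add: exp_minus inverse_eq_divide)
    finally show ?thesis .
  qed
  have q0: "q \<ge> 0" unfolding q_def using t0 y0 by simp
  have tail_le: "tail \<le> q * \<Phi> y"
  proof -
    have s1: "summable (\<lambda>k. t^(2*(k+n)) / \<beta> (k+n))"
      using summable_ignore_initial_segment[OF sumt, of n] by simp
    have s2: "summable (\<lambda>k. y^(2*(k+n)) / \<beta> (k+n))"
      using summable_ignore_initial_segment[OF sumy, of n] by simp
    have "tail \<le> (\<Sum>k. q * (y^(2*(k+n)) / \<beta> (k+n)))" unfolding tail_def
    proof (rule suminf_le[OF _ s1 summable_mult[OF s2]])
      fix k
      have "t^(2*(k+n)) = t^(2*n) * t^(2*k)" by (simp add: algebra_simps power_add)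
      also have "\<dots> \<le> t^(2*n) * y^(2*k)" using t0 ty by (intro mult_left_mono power_mono) auto
      also have "\<dots> = q * y^(2*(k+n))" unfolding q_def using y0
        by (simp add: power_divide algebra_simps power_add)
      finally show "t^(2*(k+n)) / \<beta> (k+n) \<le> q * (y^(2*(k+n)) / \<beta> (k+n))"
        using pos[of "k+n"] by (simp add: divide_right_mono)
    qed
    also have "\<dots> = q * (\<Sum>k. y^(2*(k+n)) / \<beta> (k+n))" by (rule suminf_mult[OF s2])
    also have "(\<Sum>k. y^(2*(k+n)) / \<beta> (k+n)) \<le> \<Phi> y"
    proof -
      have "\<Phi> y = (\<Sum>k. y^(2*(k+n)) / \<beta> (k+n)) + (\<Sum>k<n. y^(2*k) / \<beta> k)"
        unfolding Phi by (rule suminf_split_initial_segment[OF sumy])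
      moreover have "(\<Sum>k<n. y^(2*k) / \<beta> k) \<ge> 0" using y0 pos by (intro sum_nonneg) (simp add: less_imp_le)
      ultimately show ?thesis by simp
    qed
    hence "q * (\<Sum>k. y^(2*(k+n)) / \<beta> (k+n)) \<le> q * \<Phi> y" using q0 by (rule mult_left_mono)
    finally show ?thesis .
  qed
  have "q * \<Phi> y \<le> q * (Q * \<Phi> t)" by (rule mult_left_mono[OF PhiyQ q0])
  hence "\<Phi> t \<le> S + q * (Q * \<Phi> t)"
    using split tail_le by linarith
  also have "q * (Q * \<Phi> t) \<le> (1 / (2*Q)) * (Q * \<Phi> t)"
  proof (rule mult_right_mono[OF q_le])
    have "\<Phi> t \<ge> 0" unfolding Phi using t0 pos
      by (intro suminf_nonneg[OF sumt]) (simp add: less_imp_le)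
    thus "0 \<le> Q * \<Phi> t" using Q by simp
  qed
  also have "(1 / (2*Q)) * (Q * \<Phi> t) = \<Phi> t / 2" using Q by simp
  finally have "\<Phi> t \<le> 2 * S" by simp
  hence "\<Phi> t \<le> 2 * (real n * (C / \<beta> n))" using Sle by linarith
  hence "Q * \<Phi> t \<le> Q * (2 * (real n * (C / \<beta> n)))" using Q by (intro mult_left_mono) auto
  hence "real n / (C * \<beta> (2*n)) \<le> Q * (2 * (real n * (C / \<beta> n)))"
    using low PhiyQ by linarith
  moreover have "real n / (C * \<beta> (2*n)) = real n * (1 / (C * \<beta> (2*n)))" by (simp only: times_divide_eq_right mult_1_right)
  moreover have "Q * (2 * (real n * (C / \<beta> n))) = real n * (2 * Q * C / \<beta> n)" by (simp add: algebra_simps)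
  ultimately have h0: "real n * (1 / (C * \<beta> (2*n))) \<le> real n * (2 * Q * C / \<beta> n)" by linarith
  have h: "1 / (C * \<beta> (2*n)) \<le> 2 * Q * C / \<beta> n"
    using mult_left_le_imp_le[OF h0 nL(2)] .
  have pp: "0 < C * \<beta> (2*n) * \<beta> n" using C pos[of n] pos[of "2*n"] by simp
  have "(1 / (C * \<beta> (2*n))) * (C * \<beta> (2*n) * \<beta> n) \<le> (2 * Q * C / \<beta> n) * (C * \<beta> (2*n) * \<beta> n)"
    using mult_right_mono[OF h, of "C * \<beta> (2*n) * \<beta> n"] pp by linarith
  moreover have "(1 / (C * \<beta> (2*n))) * (C * \<beta> (2*n) * \<beta> n) = \<beta> n" using C pos[of "2*n"] by simp
  moreover have "(2 * Q * C / \<beta> n) * (C * \<beta> (2*n) * \<beta> n) = 2 * Q * C^2 * \<beta> (2*n)"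
  proof -
    have "\<beta> n \<noteq> 0" using pos[of n] by simp
    hence "(2 * Q * C / \<beta> n) * (C * \<beta> (2*n) * \<beta> n) = (2 * Q * C) * (C * \<beta> (2*n)) * (\<beta> n / \<beta> n)"
      by (simp only: times_divide_eq_left times_divide_eq_right mult.assoc mult.left_commute)
    also have "\<dots> = 2 * Q * C^2 * \<beta> (2*n)" using \<open>\<beta> n \<noteq> 0\<close> by (simp add: power2_eq_square mult.assoc)
    finally show ?thesis .
  qed
  ultimately show ?thesis by linarith
qed


theorem mainTheorem12:
  fixes \<beta> :: "nat \<Rightarrow> real" and a :: real
  assumes pos: "\<And>n. \<beta> n > 0"
    and ess: "ess_decreasing \<beta>"
    and lim: "liminf (\<lambda>n. ereal (root n (\<beta> n))) \<ge> 1"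
    and a: "0 < a" "a < 1"
    and bdd: "bounded_comp_op \<beta> (complex_of_real a)"
  shows "Delta2 \<beta>"
proof -
  obtain C where C1: "C \<ge> 1" and C2: "\<And>m n. n \<le> m \<Longrightarrow> \<beta> m \<le> C * \<beta> n"
    using ess unfolding ess_decreasing_def by blast
  define \<Phi> where "\<Phi> = (\<lambda>t::real. \<Sum>k. t^(2*k) / \<beta> k)"
  define \<tau> where "\<tau> = (\<lambda>t::real. (a+t)/(1+a*t))"
  obtain Q1 where Q1: "Q1 \<ge> 1" and stp: "\<And>t. 0 \<le> t \<Longrightarrow> t < 1 \<Longrightarrow> \<Phi> (\<tau> t) \<le> Q1 * \<Phi> t"
    using step_bound[OF pos lim a bdd] unfolding \<Phi>_def \<tau>_def by blast
  have summ: "\<And>t. 0 \<le> t \<Longrightarrow> t < 1 \<Longrightarrow> summable (\<lambda>k. t^(2*k) / \<beta> k)"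
    using phi_summable[OF pos lim] by blast
  have mono: "\<Phi> y \<le> \<Phi> u" if "0 \<le> y" "y \<le> u" "u < 1" for y u
    unfolding \<Phi>_def
  proof (rule suminf_le)
    fix k show "y^(2*k) / \<beta> k \<le> u^(2*k) / \<beta> k"
      using that pos[of k] by (intro divide_right_mono power_mono) auto
  qed (use summ that in auto)
  have \<tau>1: "0 \<le> \<tau> s \<and> \<tau> s < 1 \<and> 1 - \<tau> s \<le> (1-a)*(1-s)" if s: "0 \<le> s" "s < 1" for s
  proof -
    have den: "1 \<le> 1 + a * s" using a s by simp
    have "0 \<le> \<tau> s" unfolding \<tau>_def using a s den by simp
    moreover have "1 - \<tau> s = (1-a)*(1-s) / (1+a * s)" unfolding \<tau>_def using den
      by (simp add: field_simps)
    moreover have "(1-a)*(1-s) / (1+a * s) \<le> (1-a)*(1-s)"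
    proof -
      have x0: "0 \<le> (1-a)*(1-s)" using a s by simp
      have "(1-a)*(1-s) / (1+a * s) \<le> (1-a)*(1-s) / 1" using x0 den by (intro divide_left_mono) auto
      thus ?thesis by simp
    qed
    moreover have "0 < (1-a)*(1-s) / (1+a * s)" using a s den by (intro divide_pos_pos mult_pos_pos; linarith)
    ultimately show ?thesis by linarith
  qed
  have iter: "0 \<le> (\<tau>^^j) t \<and> (\<tau>^^j) t < 1 \<and> 1 - (\<tau>^^j) t \<le> (1-a)^j*(1-t) \<and> \<Phi> ((\<tau>^^j) t) \<le> Q1^j * \<Phi> t"
    if t: "0 \<le> t" "t < 1" for j t
  proof (induction j)
    case 0 thus ?case using t by simp
  next
    case (Suc j)
    define s where "s = (\<tau>^^j) t"
    have s: "0 \<le> s" "s < 1" "1 - s \<le> (1-a)^j*(1-t)" "\<Phi> s \<le> Q1^j * \<Phi> t"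
      using Suc unfolding s_def by auto
    have e: "(\<tau>^^Suc j) t = \<tau> s" unfolding s_def by simp
    have a1: "0 \<le> \<tau> s" "\<tau> s < 1" "1 - \<tau> s \<le> (1-a)*(1-s)" using \<tau>1[OF s(1,2)] by auto
    have "(1-a)*(1-s) \<le> (1-a)*((1-a)^j*(1-t))" using s(3) a by (intro mult_left_mono) auto
    hence b: "1 - \<tau> s \<le> (1-a)^Suc j*(1-t)" using a1(3) by (simp add: mult.assoc)
    have "\<Phi> (\<tau> s) \<le> Q1 * \<Phi> s" by (rule stp[OF s(1,2)])
    also have "\<dots> \<le> Q1 * (Q1^j * \<Phi> t)" using s(4) Q1 by (intro mult_left_mono) auto
    finally have c: "\<Phi> (\<tau> s) \<le> Q1^Suc j * \<Phi> t" by (simp add: mult.assoc)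
    show ?case unfolding e using a1 b c by blast
  qed
  define K where "K = ln Q1 + 1"
  have lnQ0: "ln Q1 \<ge> 0" using Q1 by simp
  have K0: "K > 0" unfolding K_def using lnQ0 by linarith
  have l1: "(\<lambda>j. (1-a)^j) \<longlonglongrightarrow> 0" using a by (intro LIMSEQ_power_zero) auto
  have l2: "(\<lambda>j. of_nat j * (1-a)^j) \<longlonglongrightarrow> (0::real)" using a by (intro powser_times_n_limit_0) auto
  have "eventually (\<lambda>j. (1-a)^j < 1/32) sequentially" using order_tendstoD(2)[OF l1, of "1/32"] by simp
  moreover have "eventually (\<lambda>j. of_nat j * (1-a)^j < 1/(32*K)) sequentially"
    using order_tendstoD(2)[OF l2, of "1/(32*K)"] K0 by simp
  ultimately have "eventually (\<lambda>j. (1-a)^j < 1/32 \<and> of_nat j * (1-a)^j < 1/(32*K)) sequentially"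
    by (rule eventually_conj)
  then obtain N where "\<forall>j\<ge>N. (1-a)^j < 1/32 \<and> of_nat j * (1-a)^j < 1/(32*K)"
    unfolding eventually_sequentially by blast
  then obtain j where j1: "(1-a)^j < 1/32" and j2: "real j * (1-a)^j < 1/(32*K)"
    by blast
  define \<rho> where "\<rho> = (1-a)^j"
  define Q where "Q = Q1^j"
  have Q: "Q \<ge> 1" unfolding Q_def using Q1 by (simp add: one_le_power)
  have rho0: "0 < \<rho>" unfolding \<rho>_def using a by simp
  have rho1: "\<rho> \<le> 1/2" using j1 unfolding \<rho>_def by simp
  have rho2: "\<rho> * ln (2*Q) \<le> 1/16"
  proof -
    have "ln (2*Q) = ln 2 + real j * ln Q1" unfolding Q_def using Q1 by (simp add: ln_mult ln_realpow)
    also have "\<dots> \<le> 1 + real j * ln Q1" using ln_2_less_1 by simp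
    finally have "\<rho> * ln (2*Q) \<le> \<rho> * (1 + real j * ln Q1)" using rho0 by (intro mult_left_mono) auto
    also have "\<dots> = \<rho> + (real j * \<rho>) * ln Q1" by (simp add: algebra_simps)
    also have "(real j * \<rho>) * ln Q1 \<le> (1/(32*K)) * K"
    proof (rule mult_mono)
      show "real j * \<rho> \<le> 1/(32*K)" using j2 unfolding \<rho>_def by simp
      show "ln Q1 \<le> K" unfolding K_def by simp
    qed (use K0 lnQ0 rho0 in auto)
    also have "(1/(32*K)) * K = 1/32" using K0 by simp
    finally show ?thesis using j1 unfolding \<rho>_def by simp
  qed
  have hyp: "\<Phi> (1 - \<rho> * (1 - t)) \<le> Q * \<Phi> t" if t: "0 \<le> t" "t < 1" for t
  proof -
    define u where "u = (\<tau>^^j) t"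
    have u: "0 \<le> u" "u < 1" "1 - u \<le> \<rho> * (1-t)" "\<Phi> u \<le> Q * \<Phi> t"
      using iter[OF t, of j] unfolding u_def \<rho>_def Q_def by auto
    have "\<rho> * (1 - t) \<le> 1 * 1" using rho0 rho1 t by (intro mult_mono) auto
    hence "0 \<le> 1 - \<rho> * (1 - t)" by simp
    moreover have "1 - \<rho> * (1 - t) \<le> u" using u(3) by simp
    ultimately have "\<Phi> (1 - \<rho> * (1 - t)) \<le> \<Phi> u" using u(2) by (intro mono) auto
    thus ?thesis using u(4) by simp
  qed
  define D where "D = 2 * Q * C^2"
  have D0: "D > 0" unfolding D_def using Q C1 by simp
  have big: "\<beta> n \<le> D * \<beta> (2*n)" if n: "real n \<ge> ln (2*Q)" "n \<ge> 1" for n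
    unfolding D_def
    by (rule core[where \<Phi>=\<Phi> and \<beta>=\<beta> and C=C and Q=Q and \<rho>=\<rho>, OF pos C1 C2 _ summ Q rho0 rho1 rho2 hyp n]) (auto simp: \<Phi>_def)
  define N0 where "N0 = nat \<lceil>ln (2*Q)\<rceil> + 1"
  define \<delta>0 where "\<delta>0 = Min ((\<lambda>n. \<beta> (2*n) / \<beta> n) ` {..<N0})"
  have fin: "finite ((\<lambda>n. \<beta> (2*n) / \<beta> n) ` {..<N0})" by simp
  have ne: "(\<lambda>n. \<beta> (2*n) / \<beta> n) ` {..<N0} \<noteq> {}"
  proof -
    have "0 \<in> {..<N0}" unfolding N0_def by simp
    thus ?thesis by blast
  qed
  have \<delta>00: "\<delta>0 > 0" unfolding \<delta>0_def using fin ne pos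
    by (subst Min_gr_iff) auto
  define \<delta> where "\<delta> = min (min \<delta>0 (1/D)) (1/2)"
  have \<delta>0: "0 < \<delta>" unfolding \<delta>_def using \<delta>00 D0 by simp
  have \<delta>1: "\<delta> < 1" unfolding \<delta>_def by simp
  have "\<beta> (2*n) \<ge> \<delta> * \<beta> n" for n
  proof (cases "n < N0")
    case True
    hence "\<delta>0 \<le> \<beta> (2*n) / \<beta> n" unfolding \<delta>0_def using fin by (intro Min_le) auto
    hence "\<delta> \<le> \<beta> (2*n) / \<beta> n" unfolding \<delta>_def by simp
    hence "\<delta> * \<beta> n \<le> \<beta> (2*n) / \<beta> n * \<beta> n" using pos[of n] by (intro mult_right_mono) auto
    thus ?thesis using pos[of n] by simp
  next
    case False
    hence n: "real n \<ge> ln (2*Q)" "n \<ge> 1" unfolding N0_def by linarith+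
    have b: "\<beta> n \<le> D * \<beta> (2*n)" by (rule big[OF n])
    have "\<delta> \<le> 1/D" unfolding \<delta>_def by simp
    hence "\<delta> * \<beta> n \<le> (1/D) * \<beta> n" using pos[of n] by (intro mult_right_mono) auto
    also have "\<dots> \<le> (1/D) * (D * \<beta> (2*n))" using b D0 by (intro mult_left_mono) auto
    also have "\<dots> = \<beta> (2*n)" using D0 by simp
    finally show ?thesis .
  qed
  thus ?thesis unfolding Delta2_def using \<delta>0 \<delta>1 by blast
qed

end
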